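(* Let $k, \ell \in \mathbb{N}$. Then $|\mathcal{J}(k,\ell)_n| = O(n^{k-1}F_{n,\ell})$ as $n \to \infty$, where $\mathcal{J}(k,\ell)_n$ is the set of members of $\mathcal{J}(k,\ell)$ with vertex set $[n]$.
   Context: Ordered graphs of order $n$ have vertex set $[n]$ with natural order; $A\leqslant B$ means $A$ is an induced ordered subgraph of $B$ (via an injective order-preserving map preserving adjacency and non-adjacency). $G_1+\dots+G_m$ places copies of $G_1,\dots,G_m$ consecutively from left to right with no edges between copies. For $n\in\mathbb{N}$: $J^{(n)}_1=K_n$; $J^{(n)}_2$ on $[n]$ with edge set $\{1n\}$ if $n\geqslant2$ (empty if $n=1$); $J^{(n)}_3$ on $[n]$ with edges $\{1i: 2\leqslant i\leqslant n\}$; $J^{(n)}_4$ on $[n]$ with edges $\{in: 1\leqslant i\leqslant n-1\}$; $L^{(n)}$ on $[n]$ with edges $\{i(i+1): 1\leqslant i\leqslant n-1\}$; $Q_1$ on $[4]$ with edges $\{13,24\}$; $Q_2$ on $[4]$ with edges $\{14,23\}$. For $\ell\in\{1,2,3\}$, $\mathcal{J}_\ell=\{J^{(n)}_i: i\in[4], n\leqslant\ell\}\cup\{L^{(n)}: n\leqslant\ell\}$; for $\ell\geqslant4$, $\mathcal{J}_\ell$ is this set together with $Q_1,Q_2$. An ordered graph $G$ is in $\mathcal{J}(k,\ell)$ iff there are $s\leqslant k$ ordered graphs $A_1,\dots,A_s$ with $G=A_1+\dots+A_s$ such that each $A_i=B^{(i)}_1+\dots+B^{(i)}_{t(i)}$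 with all $B^{(i)}_j\in\mathcal{J}_\ell$ and, for every pair $j,j'$, $B^{(i)}_j\leqslant B^{(i)}_{j'}$ or $B^{(i)}_{j'}\leqslant B^{(i)}_j$. $F_{n,\ell}$: $F_{n,\ell}=0$ for $n<0$, $F_{0,\ell}=1$, $F_{n,\ell}=F_{n-1,\ell}+\dots+F_{n-\ell,\ell}$ for $n\geqslant1$. *)

theory Defs
  imports Main "HOL-Library.Landau_Symbols"
begin

text \<open>An ordered graph of order n: vertex set {1..n} with natural order,
  edges stored as pairs (i,j) with 1 <= i < j <= n.\<close>
type_synonym ograph = "nat \<times> (nat \<times> nat) set"

definition ord_graph :: "nat \<Rightarrow> (nat \<times> nat) set \<Rightarrow> ograph" where
  "ord_graph n E = (n, E \<inter> {(i,j). 1 \<le> i \<and> i < j \<and> j \<le> n})"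

definition induced_le :: "ograph \<Rightarrow> ograph \<Rightarrow> bool" where
  "induced_le A B \<longleftrightarrow> (\<exists>f. strict_mono_on {1..fst A} f \<and> f ` {1..fst A} \<subseteq> {1..fst B} \<and>
      (\<forall>i j. 1 \<le> i \<longrightarrow> i < j \<longrightarrow> j \<le> fst A \<longrightarrow>
         ((i,j) \<in> snd A \<longleftrightarrow> (f i, f j) \<in> snd B)))"

definition shift_edges :: "nat \<Rightarrow> (nat \<times> nat) set \<Rightarrow> (nat \<times> nat) set" where
  "shift_edges d E = {(i + d, j + d) | i j. (i, j) \<in> E}"

fun osum :: "ograph list \<Rightarrow> ograph" where
  "osum [] = (0, {})"
| "osum (G # Gs) = (fst G + fst (osum Gs), snd G \<union> shift_edges (fst G) (snd (osum Gs)))"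

definition J1 :: "nat \<Rightarrow> ograph" where
  "J1 n = ord_graph n {(i,j). 1 \<le> i \<and> i < j \<and> j \<le> n}"
definition J2 :: "nat \<Rightarrow> ograph" where
  "J2 n = ord_graph n (if n \<ge> 2 then {(1,n)} else {})"
definition J3 :: "nat \<Rightarrow> ograph" where
  "J3 n = ord_graph n {(1,i) | i. 2 \<le> i \<and> i \<le> n}"
definition J4 :: "nat \<Rightarrow> ograph" where
  "J4 n = ord_graph n {(i,n) | i. 1 \<le> i \<and> i \<le> n - 1}"
definition Lpath :: "nat \<Rightarrow> ograph" where
  "Lpath n = ord_graph n {(i,i+1) | i. 1 \<le> i \<and> i \<le> n - 1}"
definition Q1 :: ograph where "Q1 = ord_graph 4 {(1,3),(2,4)}"
definition Q2 :: ograph where "Q2 = ord_graph 4 {(1,4),(2,3)}"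

definition Jfam :: "nat \<Rightarrow> ograph set" where
  "Jfam l = {G. \<exists>n. 1 \<le> n \<and> n \<le> l \<and>
                 (G = J1 n \<or> G = J2 n \<or> G = J3 n \<or> G = J4 n \<or> G = Lpath n)}
            \<union> (if l \<ge> 4 then {Q1, Q2} else {})"

definition induced_chain :: "ograph list \<Rightarrow> bool" where
  "induced_chain Bs \<longleftrightarrow> (\<forall>B \<in> set Bs. \<forall>B' \<in> set Bs. induced_le B B' \<or> induced_le B' B)"

definition Jkl :: "nat \<Rightarrow> nat \<Rightarrow> ograph set" where
  "Jkl k l = {G. \<exists>As. length As \<le> k \<and> G = osum (map osum As) \<and>
                 (\<forall>Bs \<in> set As. set Bs \<subseteq> Jfam l \<and> induced_chain Bs)}"

text \<open>F_{n,\<ell>}: F_0 = 1, F_n = F_{n-1} + ... + F_{n-\<ell>} (negative indices give 0).\<close>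
function Fl :: "nat \<Rightarrow> nat \<Rightarrow> nat" where
  "Fl n l = (if n = 0 then 1 else (\<Sum>i\<in>{1..min l n}. Fl (n - i) l))"
  by auto
termination by (relation "measure fst") auto

end

theory Submission
  imports Defs "HOL-Library.FuncSet"
begin

declare Fl.simps[simp del]

lemma smono_id:
  assumes sm: "strict_mono_on {1..n} f" and rg: "f ` {1..n} \<subseteq> {1..(n::nat)}"
    and i: "i \<in> {1..n}"
  shows "f i = i"
proof -
  have ge: "1 \<le> i \<longrightarrow> i \<le> n \<longrightarrow> i \<le> f i" for i
  proof (induction i)
    case 0 then show ?case by simp
  next
    case (Suc i)
    show ?case
    proof (cases "i = 0")
      case True then show ?thesis using rg Suc.prems by (auto simp: image_subset_iff)
    next
      case False
      then show ?thesis using Suc strict_mono_onD[OF sm, of i "Suc i"] by auto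
    qed
  qed
  have le: "\<forall>i. i + d = n \<longrightarrow> 1 \<le> i \<longrightarrow> f i \<le> i" for d
  proof (induction d)
    case 0 then show ?case using rg by (auto simp: image_subset_iff)
  next
    case (Suc d)
    show ?case
    proof (intro allI impI)
      fix i assume a: "i + Suc d = n" "1 \<le> i"
      have "f (Suc i) \<le> Suc i" using Suc a by auto
      moreover have "f i < f (Suc i)" using strict_mono_onD[OF sm, of i "Suc i"] a by auto
      ultimately show "f i \<le> i" by simp
    qed
  qed
  show ?thesis using ge[of i] le[of "n - i"] i by force
qed

definition valid :: "ograph \<Rightarrow> bool" where
  "valid G \<longleftrightarrow> snd G \<subseteq> {(i,j). 1 \<le> i \<and> i < j \<and> j \<le> fst G}"

lemma valid_ord_graph: "valid (ord_graph n E)"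
  by (auto simp: valid_def ord_graph_def)

lemma induced_le_eq:
  assumes "induced_le A B" "fst A = fst B" "valid A" "valid B"
  shows "A = B"
proof -
  obtain f where f: "strict_mono_on {1..fst A} f" "f ` {1..fst A} \<subseteq> {1..fst B}"
    "\<forall>i j. 1 \<le> i \<longrightarrow> i < j \<longrightarrow> j \<le> fst A \<longrightarrow> ((i,j) \<in> snd A \<longleftrightarrow> (f i, f j) \<in> snd B)"
    using assms(1) unfolding induced_le_def by blast
  have id: "\<And>i. i \<in> {1..fst A} \<Longrightarrow> f i = i" using smono_id[OF f(1)] f(2) assms(2) by auto
  have "snd A = snd B"
  proof (intro set_eqI iffI)
    fix p assume p: "p \<in> snd A"
    obtain i j where ij: "p = (i,j)" by force
    then have "1 \<le> i" "i < j" "j \<le> fst A" using p assms(3) by (auto simp: valid_def)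
    then show "p \<in> snd B" using f(3) id p ij by auto
  next
    fix p assume p: "p \<in> snd B"
    obtain i j where ij: "p = (i,j)" by force
    then have "1 \<le> i" "i < j" "j \<le> fst A" using p assms(4,2) by (auto simp: valid_def)
    then show "p \<in> snd A" using f(3) id p ij by auto
  qed
  then show ?thesis using assms(2) by (simp add: prod_eq_iff)
qed

lemma Jfam_eq: "Jfam l = J1 ` {1..l} \<union> J2 ` {1..l} \<union> J3 ` {1..l} \<union> J4 ` {1..l} \<union> Lpath ` {1..l}
   \<union> (if l \<ge> 4 then {Q1, Q2} else {})"
  unfolding Jfam_def by auto

lemma finite_Jfam: "finite (Jfam l)"
  unfolding Jfam_eq by auto

lemma fst_og: "fst (ord_graph n E) = n" by (simp add: ord_graph_def)

lemma Jfam_props: "B \<in> Jfam l \<Longrightarrow> valid B \<and> 1 \<le> fst B \<and> fst B \<le> l"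
proof -
  assume "B \<in> Jfam l"
  then consider s where "s \<in> {1..l}" "B = J1 s \<or> B = J2 s \<or> B = J3 s \<or> B = J4 s \<or> B = Lpath s"
    | "l \<ge> 4" "B = Q1 \<or> B = Q2"
    unfolding Jfam_eq by (auto split: if_splits)
  then show ?thesis
  proof cases
    case 1 then show ?thesis unfolding J1_def J2_def J3_def J4_def Lpath_def
      by (elim disjE) (auto simp: valid_ord_graph fst_og)
  next
    case 2 then show ?thesis unfolding Q1_def Q2_def using valid_ord_graph fst_og by auto
  qed
qed

lemma J1_in: "1 \<le> s \<Longrightarrow> s \<le> l \<Longrightarrow> J1 s \<in> Jfam l"
  unfolding Jfam_def by auto

lemma fst_J1: "fst (J1 s) = s" by (simp add: J1_def ord_graph_def)

definition PG :: "nat \<Rightarrow> (nat \<Rightarrow> ograph) set" where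
  "PG l = {g. (\<forall>s\<in>{1..l}. g s \<in> Jfam l \<and> fst (g s) = s) \<and> (\<forall>s. s \<notin> {1..l} \<longrightarrow> g s = undefined)}"

lemma finite_PG: "finite (PG l)"
proof -
  have "PG l \<subseteq> PiE {1..l} (\<lambda>_. Jfam l)" unfolding PG_def PiE_def extensional_def by auto
  then show ?thesis using finite_PiE[of "{1..l}" "\<lambda>_. Jfam l"] finite_Jfam finite_subset by blast
qed

lemma chain_rep:
  assumes "set Bs \<subseteq> Jfam l" "induced_chain Bs"
  shows "\<exists>g ns. g \<in> PG l \<and> set ns \<subseteq> {1..l} \<and> Bs = map g ns"
proof -
  define g where "g s = (if s \<in> {1..l} then (if \<exists>B\<in>set Bs. fst B = s then (SOME B. B \<in> set Bs \<and> fst B = s) else J1 s) else undefined)" for s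
  have uniq: "B = B'" if "B \<in> set Bs" "B' \<in> set Bs" "fst B = fst B'" for B B'
  proof -
    have "induced_le B B' \<or> induced_le B' B" using assms(2) that unfolding induced_chain_def by blast
    then show ?thesis using induced_le_eq Jfam_props that assms(1) by (metis subsetD)
  qed
  have gB: "g (fst B) = B" if "B \<in> set Bs" for B
  proof -
    have "fst B \<in> {1..l}" using Jfam_props[of B l] that assms(1) by auto
    moreover have "(SOME B'. B' \<in> set Bs \<and> fst B' = fst B) = B"
      by (rule some_equality) (use that uniq in auto)
    ultimately show ?thesis unfolding g_def using that by auto
  qed
  have A: "g s \<in> Jfam l \<and> fst (g s) = s" if s: "s \<in> {1..l}" for s
    proof (cases "\<exists>B\<in>set Bs. fst B = s")
      case True
      then obtain B where B: "B \<in> set Bs" "fst B = s" by blast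
      then have "g s = B" using gB by blast
      then show ?thesis using B assms(1) by auto
    next
      case False
      then show ?thesis using s by (simp add: g_def J1_in fst_J1)
    qed
  have "g \<in> PG l"
    unfolding PG_def using A by (auto simp: g_def)
  moreover have "set (map fst Bs) \<subseteq> {1..l}" using Jfam_props assms(1) by auto
  moreover have "Bs = map g (map fst Bs)" using gB by (induction Bs) auto
  ultimately show ?thesis by blast
qed


lemma fst_osum: "fst (osum Gs) = sum_list (map fst Gs)"
  by (induction Gs) auto

fun splitl :: "nat list \<Rightarrow> 'a list \<Rightarrow> 'a list list" where
  "splitl [] xs = [xs]"
| "splitl (m # ms) xs = take m xs # splitl ms (drop m xs)"

lemma splitl_concat: "nss \<noteq> [] \<Longrightarrow> splitl (butlast (map length nss)) (concat nss) = nss"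
proof (induction nss)
  case Nil then show ?case by simp
next
  case (Cons ns nss)
  then show ?case by (cases "nss = []") auto
qed

lemma sum_list_concat_nat: "sum_list (concat (xss :: nat list list)) = sum_list (map sum_list xss)"
  by (induction xss) auto

lemma length_le_sum: "set (ns :: nat list) \<subseteq> {1..l} \<Longrightarrow> length ns \<le> sum_list ns"
  by (induction ns) auto

definition Comp :: "nat \<Rightarrow> nat \<Rightarrow> nat list set" where
  "Comp l n = {cs. sum_list cs = n \<and> set cs \<subseteq> {1..l}}"

lemma Comp_bound: "finite (Comp l n) \<and> card (Comp l n) \<le> Fl n l"
proof (induction n rule: less_induct)
  case (less n)
  show ?case
  proof (cases "n = 0")
    case True
    have "Comp l n = {[]}" unfolding Comp_def using True
      apply (auto simp: subset_iff)
      subgoal for x by (cases x) auto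
      done
    moreover have "Fl n l = 1" using True by (subst Fl.simps) simp
    ultimately show ?thesis by simp
  next
    case False
    have sub: "Comp l n \<subseteq> (\<Union>i\<in>{1..min l n}. (#) i ` Comp l (n - i))"
    proof
      fix cs assume cs: "cs \<in> Comp l n"
      then obtain i cs' where c: "cs = i # cs'" using False unfolding Comp_def by (cases cs) auto
      then have "i \<in> {1..min l n}" "cs' \<in> Comp l (n - i)" using cs unfolding Comp_def by auto
      then show "cs \<in> (\<Union>i\<in>{1..min l n}. (#) i ` Comp l (n - i))" using c by blast
    qed
    have fin: "finite (Comp l (n - i))" "card (Comp l (n - i)) \<le> Fl (n - i) l" if "i \<in> {1..min l n}" for i
      using less[of "n - i"] that False by auto
    have F: "Fl n l = (\<Sum>i\<in>{1..min l n}. Fl (n - i) l)" using False by (subst Fl.simps) simp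
    have "finite (\<Union>i\<in>{1..min l n}. (#) i ` Comp l (n - i))" using fin by auto
    then have f1: "finite (Comp l n)" using sub finite_subset by blast
    have "card (Comp l n) \<le> card (\<Union>i\<in>{1..min l n}. (#) i ` Comp l (n - i))"
      using sub card_mono \<open>finite (\<Union>i\<in>{1..min l n}. _)\<close> by blast
    also have "\<dots> \<le> (\<Sum>i\<in>{1..min l n}. card ((#) i ` Comp l (n - i)))" by (rule card_UN_le) simp
    also have "\<dots> \<le> (\<Sum>i\<in>{1..min l n}. Fl (n - i) l)"
      by (rule sum_mono) (use fin card_image_le order_trans in blast)
    finally show ?thesis using f1 F by simp
  qed
qed

definition dec :: "(nat \<Rightarrow> ograph) list \<times> nat list \<times> nat list \<Rightarrow> ograph" where
  "dec t = (case t of (gs, cs, ls) \<Rightarrow> osum (map (\<lambda>(g,ns). osum (map g ns)) (zip gs (splitl ls cs))))"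

definition TT :: "nat \<Rightarrow> nat \<Rightarrow> nat \<Rightarrow> ((nat \<Rightarrow> ograph) list \<times> nat list \<times> nat list) set" where
  "TT k l n = {gs. set gs \<subseteq> PG l \<and> length gs \<le> k} \<times> (Comp l n \<times> {ls. set ls \<subseteq> {0..n} \<and> length ls \<le> k - 1})"

lemma fst_inner: "g \<in> PG l \<Longrightarrow> set ns \<subseteq> {1..l} \<Longrightarrow> fst (osum (map g ns)) = sum_list ns"
proof -
  assume a: "g \<in> PG l" "set ns \<subseteq> {1..l}"
  have "map (fst \<circ> g) ns = ns" using a by (induction ns) (auto simp: PG_def)
  then show ?thesis by (simp add: fst_osum)
qed

lemma cover: "{G \<in> Jkl k l. fst G = n} \<subseteq> dec ` TT k l n"
proof
  fix G assume "G \<in> {G \<in> Jkl k l. fst G = n}"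
  then obtain As where As: "length As \<le> k" "G = osum (map osum As)"
    "\<forall>Bs\<in>set As. set Bs \<subseteq> Jfam l \<and> induced_chain Bs" and n: "fst G = n"
    unfolding Jkl_def by blast
  have "\<forall>Bs\<in>set As. \<exists>p. fst p \<in> PG l \<and> set (snd p) \<subseteq> {1..l} \<and> Bs = map (fst p) (snd p)"
    using chain_rep As(3) by fastforce
  then obtain P where P: "\<And>Bs. Bs \<in> set As \<Longrightarrow> fst (P Bs) \<in> PG l \<and> set (snd (P Bs)) \<subseteq> {1..l} \<and> Bs = map (fst (P Bs)) (snd (P Bs))"
    by metis
  define ps where "ps = map P As"
  define gs where "gs = map fst ps"
  define nss where "nss = map snd ps"
  have ps: "\<And>p. p \<in> set ps \<Longrightarrow> fst p \<in> PG l \<and> set (snd p) \<subseteq> {1..l}" using P unfolding ps_def by (metis imageE list.set_map)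
  have As_eq: "map osum As = map (\<lambda>(g,ns). osum (map g ns)) ps"
    unfolding ps_def using P by (induction As) (auto simp: split_beta)
  have zip: "zip gs (splitl (butlast (map length nss)) (concat nss)) = ps"
  proof (cases "nss = []")
    case True then show ?thesis by (simp add: gs_def nss_def)
  next
    case False
    then have "splitl (butlast (map length nss)) (concat nss) = nss" by (rule splitl_concat)
    then show ?thesis unfolding gs_def nss_def by (simp only: zip_map_fst_snd)
  qed
  have G_eq: "G = dec (gs, concat nss, butlast (map length nss))"
    unfolding dec_def using zip As(2) As_eq by simp
  have "fst G = sum_list (map (fst \<circ> (\<lambda>(g,ns). osum (map g ns))) ps)"
    using As(2) As_eq by (simp only: fst_osum map_map)
  also have "\<dots> = sum_list (map (\<lambda>p. sum_list (snd p)) ps)"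
  proof (intro arg_cong[where f = sum_list] map_cong refl)
    fix p assume "p \<in> set ps"
    then show "(fst \<circ> (\<lambda>(g,ns). osum (map g ns))) p = sum_list (snd p)"
      using ps[of p] fst_inner[of "fst p" l "snd p"] by (simp add: split_beta)
  qed
  also have "\<dots> = sum_list (concat nss)" by (simp add: sum_list_concat_nat nss_def o_def)
  finally have sn: "sum_list (concat nss) = n" using n by simp
  have setc: "set (concat nss) \<subseteq> {1..l}"
  proof
    fix x assume "x \<in> set (concat nss)"
    then obtain p where "p \<in> set ps" "x \<in> set (snd p)" unfolding nss_def by auto
    then show "x \<in> {1..l}" using ps by blast
  qed
  have "length ns \<le> n" if "ns \<in> set nss" for ns
  proof -
    have "length ns \<le> sum_list ns" using length_le_sum setc that by auto
    also have "\<dots> \<le> sum_list (map sum_list nss)" using that by (simp add: member_le_sum_list)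
    finally show ?thesis using sn sum_list_concat_nat by simp
  qed
  then have "set (butlast (map length nss)) \<subseteq> {0..n}"
    by (auto dest!: in_set_butlastD)
  moreover have "length (butlast (map length nss)) \<le> k - 1" using As(1) by (simp add: nss_def ps_def)
  moreover have "set gs \<subseteq> PG l" unfolding gs_def using ps by auto
  moreover have "length gs \<le> k" using As(1) by (simp add: gs_def ps_def)
  moreover have "concat nss \<in> Comp l n" using sn setc by (simp add: Comp_def)
  ultimately have "(gs, concat nss, butlast (map length nss)) \<in> TT k l n" unfolding TT_def by auto
  then show "G \<in> dec ` TT k l n" using G_eq by blast
qed


lemma card_bound:
  assumes k1: "1 \<le> k" shows "card {G \<in> Jkl k l. fst G = n} \<le> card {gs. set gs \<subseteq> PG l \<and> length gs \<le> k} * (Fl n l * (k * (n+1)^(k-1)))"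
proof -
  define A where "A = {gs. set gs \<subseteq> PG l \<and> length gs \<le> k}"
  define C where "C = {ls. set ls \<subseteq> {0..n} \<and> length ls \<le> k - 1}"
  have fA: "finite A" unfolding A_def by (rule finite_lists_length_le[OF finite_PG])
  have fC: "finite C" unfolding C_def by (rule finite_lists_length_le) simp
  have fB: "finite (Comp l n)" and cB: "card (Comp l n) \<le> Fl n l" using Comp_bound by auto
  have TT: "TT k l n = A \<times> (Comp l n \<times> C)" unfolding TT_def A_def C_def by simp
  have fT: "finite (TT k l n)" unfolding TT using fA fB fC by simp
  have cC: "card C \<le> k * (n+1)^(k-1)"
  proof -
    have "card C = (\<Sum>i\<le>k-1. (n+1)^i)" unfolding C_def by (subst card_lists_length_le) auto
    also have "\<dots> \<le> (\<Sum>i\<le>k-1. (n+1)^(k-1))" by (intro sum_mono power_increasing) auto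
    also have "\<dots> \<le> k * (n+1)^(k-1)" using k1 by (cases k) auto
    finally show ?thesis .
  qed
  have "card {G \<in> Jkl k l. fst G = n} \<le> card (dec ` TT k l n)"
    using cover fT by (intro card_mono) auto
  also have "\<dots> \<le> card (TT k l n)" using card_image_le fT by blast
  also have "\<dots> = card A * (card (Comp l n) * card C)" unfolding TT by (simp add: card_cartesian_product)
  also have "\<dots> \<le> card A * (Fl n l * (k * (n+1)^(k-1)))" using cB cC by (intro mult_le_mono2 mult_le_mono) auto
  finally show ?thesis unfolding A_def .
qed

theorem lemma26:
  fixes k l :: nat
  assumes "1 \<le> k" and "1 \<le> l"
  shows "(\<lambda>n. real (card {G \<in> Jkl k l. fst G = n}))
           \<in> O(\<lambda>n. real n ^ (k - 1) * real (Fl n l))"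
proof (rule bigoI[where c = "real (card {gs. set gs \<subseteq> PG l \<and> length gs \<le> k} * k * 2^(k-1))"])
  define cA where "cA = card {gs. set gs \<subseteq> PG l \<and> length gs \<le> k}"
  show "eventually (\<lambda>n. norm (real (card {G \<in> Jkl k l. fst G = n})) \<le>
      real (card {gs. set gs \<subseteq> PG l \<and> length gs \<le> k} * k * 2^(k-1)) * norm (real n ^ (k - 1) * real (Fl n l))) at_top"
    unfolding cA_def[symmetric]
  proof (rule eventually_mono[OF eventually_ge_at_top[of "1::nat"]])
    fix n :: nat assume n: "1 \<le> n"
    have "(n+1)^(k-1) \<le> (2*n)^(k-1)" using n by (intro power_mono) auto
    also have "\<dots> = 2^(k-1) * n^(k-1)" by (simp add: power_mult_distrib)
    finally have p: "(n+1)^(k-1) \<le> 2^(k-1) * n^(k-1)" .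
    have "card {G \<in> Jkl k l. fst G = n} \<le> cA * (Fl n l * (k * (n+1)^(k-1)))"
      using card_bound[OF assms(1)] unfolding cA_def by blast
    also have "\<dots> \<le> cA * (Fl n l * (k * (2^(k-1) * n^(k-1))))"
      using p by (intro mult_le_mono2) auto
    also have "\<dots> = (cA * k * 2^(k-1)) * (n^(k-1) * Fl n l)" by (simp add: ac_simps)
    finally have "real (card {G \<in> Jkl k l. fst G = n}) \<le> real ((cA * k * 2^(k-1)) * (n^(k-1) * Fl n l))"
      by (simp only: of_nat_le_iff)
    then show "norm (real (card {G \<in> Jkl k l. fst G = n})) \<le>
      real (cA * k * 2^(k-1)) * norm (real n ^ (k - 1) * real (Fl n l))"
      by simp
  qed
qed

end
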